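(* Let $0<\alpha<d$, $1\leq p<d/\alpha$, $f\in L^p(\mathbb{R}^d)$, and $\varepsilon>0$. Then there is a subset $\widetilde{\mathcal{Q}}_\alpha\subset\mathcal{Q}_\alpha$ such that for each $Q\in\mathcal{Q}_\alpha$ with $\ell(Q)^\alpha f_Q>\varepsilon$ there is $P\in\widetilde{\mathcal{Q}}_\alpha$ with $Q\subset\operatorname{prt}(P)$ and $f_Q\leq 2^d f_P$. Furthermore, for any two $Q,P\in\widetilde{\mathcal{Q}}_\alpha$ at least one of the following holds: (1) $\operatorname{prt}(Q)=\operatorname{prt}(P)$; (2) $\operatorname{prt}(Q)\cap\operatorname{prt}(P)=\emptyset$; (3) $f_Q/f_P\notin(2^{-d},2^d)$.
   Context: Dyadic cubes are $[x_1,x_1+2^n)\times\dots\times[x_d,x_d+2^n)$, $n\in\mathbb{Z}$, $x_i\in2^n\mathbb{Z}$; $\ell(Q)$ is the sidelength, $\operatorname{prt}(Q)$ is the dyadic parent of $Q$ (the dyadic cube of sidelength $2\ell(Q)$ containing $Q$), and $f_Q=\frac1{|Q|}\int_Q|f|$. $\mathcal{Q}_\alpha$ is the set of dyadic cubes $Q$ such that $\ell(P)^\alpha f_P<\ell(Q)^\alpha f_Q$ for every dyadic cube $P\supsetneq Q$. *)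

theory Defs
  imports "HOL-Analysis.Analysis"
begin

text \<open>A dyadic cube is indexed by its generation n (sidelength 2^n) and an integer
  lattice point k; the cube is the product of [k_i 2^n, (k_i+1) 2^n).\<close>
type_synonym 'd dyad = "int \<times> ('d \<Rightarrow> int)"

definition dcube :: "('d::finite) dyad \<Rightarrow> (real^'d) set" where
  "dcube Q = {x. \<forall>i. real_of_int (snd Q i) * 2 powr real_of_int (fst Q) \<le> x$i
                    \<and> x$i < (real_of_int (snd Q i) + 1) * 2 powr real_of_int (fst Q)}"

definition side :: "('d::finite) dyad \<Rightarrow> real" where
  "side Q = 2 powr real_of_int (fst Q)"

text \<open>Dyadic parent (int div is floor division).\<close>
definition prt :: "('d::finite) dyad \<Rightarrow> 'd dyad" where
  "prt Q = (fst Q + 1, \<lambda>i. snd Q i div 2)"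

definition avg :: "(real^'d \<Rightarrow> real) \<Rightarrow> ('d::finite) dyad \<Rightarrow> real" where
  "avg f Q = (LINT x:dcube Q|lebesgue. \<bar>f x\<bar>) / measure lebesgue (dcube Q)"

definition Qalpha :: "real \<Rightarrow> (real^'d \<Rightarrow> real) \<Rightarrow> ('d::finite) dyad set" where
  "Qalpha \<alpha> f = {Q. \<forall>P. dcube Q \<subset> dcube P \<longrightarrow>
                     side P powr \<alpha> * avg f P < side Q powr \<alpha> * avg f Q}"

end

theory Submission
  imports Defs
begin

lemma kernel_exists:
  assumes "wf R"
  shows "\<exists>T. \<forall>Q. Q \<in> T \<longleftrightarrow> (B Q \<and> \<not>(\<exists>P. (P,Q) \<in> R \<and> P \<in> T))"
proof -
  define g where "g = wfrec R (\<lambda>g Q. B Q \<and> \<not>(\<exists>P. (P,Q) \<in> R \<and> g P))"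
  have geq: "g Q = (B Q \<and> \<not>(\<exists>P. (P,Q) \<in> R \<and> g P))" for Q
  proof -
    have eq: "g Q = (B Q \<and> \<not>(\<exists>P. (P,Q) \<in> R \<and> cut g R Q P))"
      unfolding g_def by (subst wfrec[OF assms]) (rule refl)
    have "((P,Q) \<in> R \<and> cut g R Q P) = ((P,Q) \<in> R \<and> g P)" for P
      using cut_apply[of P Q R g] by blast
    then show ?thesis using eq by blast
  qed
  show ?thesis
    by (rule exI[of _ "{Q. g Q}"], unfold mem_Collect_eq, intro allI, rule geq)
qed

lemma mem_dcube: "x \<in> dcube Q \<longleftrightarrow> (\<forall>i. real_of_int (snd Q i) * 2 powr real_of_int (fst Q) \<le> x$i
                    \<and> x$i < (real_of_int (snd Q i) + 1) * 2 powr real_of_int (fst Q))"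
  by (simp add: dcube_def)

lemma dcube_prt: "dcube Q \<subseteq> dcube (prt Q)"
proof
  fix x assume x: "x \<in> dcube Q"
  show "x \<in> dcube (prt Q)" unfolding mem_dcube prt_def
  proof (simp, intro allI)
    fix i
    define k where "k = snd Q i"
    define s where "s = (2::real) powr real_of_int (fst Q)"
    have s: "s > 0" by (simp add: s_def)
    have e: "(2::real) powr (real_of_int (fst Q) + 1) = 2 * s"
      by (simp add: s_def powr_add)
    have xi: "real_of_int k * s \<le> x$i" "x$i < (real_of_int k + 1) * s"
      using x unfolding mem_dcube k_def s_def by auto
    have a: "(k div 2) * 2 \<le> k" "k + 1 \<le> (k div 2 + 1) * 2" by auto
    have a1: "real_of_int (k div 2) * 2 \<le> real_of_int k" using a(1) by linarith
    have a2': "real_of_int (k + 1) \<le> real_of_int ((k div 2 + 1) * 2)" using a(2) by (simp only: of_int_le_iff)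
    have a2: "real_of_int k + 1 \<le> (real_of_int (k div 2) + 1) * 2" using a2' by simp
    have "real_of_int (k div 2) * (2 * s) \<le> x$i"
    proof -
      have "real_of_int (k div 2) * (2 * s) = (real_of_int (k div 2) * 2) * s" by (simp only: mult.assoc)
      also have "\<dots> \<le> real_of_int k * s" using mult_right_mono[OF a1, of s] s by simp
      finally show ?thesis using xi by linarith
    qed
    moreover have "x$i < (real_of_int (k div 2) + 1) * (2 * s)"
    proof -
      have "(real_of_int (k div 2) + 1) * (2 * s) = ((real_of_int (k div 2) + 1) * 2) * s" by (simp only: mult.assoc)
      moreover have "(real_of_int k + 1) * s \<le> ((real_of_int (k div 2) + 1) * 2) * s" using mult_right_mono[OF a2, of s] s by simp
      ultimately show ?thesis using xi by linarith
    qed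
    ultimately show "real_of_int (snd Q i div 2) * 2 powr (real_of_int (fst Q) + 1) \<le> x $ i \<and>
         x $ i < (real_of_int (snd Q i div 2) + 1) * 2 powr (real_of_int (fst Q) + 1)"
      by (simp add: e k_def)
  qed
qed

lemma dcube_unique:
  assumes "x \<in> dcube A" "x \<in> dcube B" "fst A = fst B"
  shows "A = B"
proof -
  have "snd A i = snd B i" for i
  proof -
    define s where "s = (2::real) powr real_of_int (fst A)"
    have s: "s > 0" by (simp add: s_def)
    have "real_of_int (snd A i) * s \<le> x$i" "x$i < (real_of_int (snd A i) + 1) * s"
         "real_of_int (snd B i) * s \<le> x$i" "x$i < (real_of_int (snd B i) + 1) * s"
      using assms unfolding mem_dcube s_def by auto
    then have "real_of_int (snd A i) * s < (real_of_int (snd B i) + 1) * s"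
              "real_of_int (snd B i) * s < (real_of_int (snd A i) + 1) * s" by linarith+
    then have "real_of_int (snd A i) < real_of_int (snd B i) + 1"
              "real_of_int (snd B i) < real_of_int (snd A i) + 1"
      using s by (meson mult_less_cancel_right_pos)+
    then show ?thesis by linarith
  qed
  then show ?thesis using assms(3) by (simp add: prod_eq_iff ext)
qed

lemma fst_prt_pow: "fst ((prt ^^ k) A) = fst A + int k"
  by (induction k) (auto simp: prt_def)

lemma dcube_prt_pow: "dcube A \<subseteq> dcube ((prt ^^ k) A)"
proof (induction k)
  case (Suc k)
  have "dcube ((prt ^^ k) A) \<subseteq> dcube (prt ((prt ^^ k) A))" by (rule dcube_prt)
  then show ?case using Suc by simp
qed simp

lemma dcube_nest:
  assumes "x \<in> dcube A" "x \<in> dcube B" "fst A \<le> fst B"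
  shows "dcube A \<subseteq> dcube B"
proof -
  define k where "k = nat (fst B - fst A)"
  have "fst ((prt ^^ k) A) = fst B" using assms(3) by (simp add: fst_prt_pow k_def)
  moreover have "x \<in> dcube ((prt ^^ k) A)" using assms(1) dcube_prt_pow by blast
  ultimately have "(prt ^^ k) A = B" using dcube_unique assms(2) by blast
  then show ?thesis using dcube_prt_pow by metis
qed


lemma dcube_box:
  fixes Q :: "('d::finite) dyad"
  defines "a \<equiv> (\<chi> i. real_of_int (snd Q i) * side Q) :: real^'d"
  defines "b \<equiv> (\<chi> i. (real_of_int (snd Q i) + 1) * side Q) :: real^'d"
  shows "box a b \<subseteq> dcube Q" "dcube Q \<subseteq> cbox a b"
  unfolding a_def b_def by (auto simp: mem_box_cart mem_dcube side_def less_imp_le)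

lemma dcube_borel: "dcube Q \<in> sets borel"
  unfolding dcube_def by measurable

lemma measure_box_side:
  fixes Q :: "('d::finite) dyad"
  defines "a \<equiv> (\<chi> i. real_of_int (snd Q i) * side Q) :: real^'d"
  defines "b \<equiv> (\<chi> i. (real_of_int (snd Q i) + 1) * side Q) :: real^'d"
  shows "measure lebesgue (box a b) = side Q ^ CARD('d)"
proof -
  have s: "side Q > 0" by (simp add: side_def)
  have e: "(b - a) \<bullet> u = side Q" if u: "u \<in> Basis" for u
  proof -
    obtain i where "u = axis i 1" using u by (auto simp: Basis_vec_def Basis_real_def)
    then show ?thesis by (simp add: a_def b_def inner_axis algebra_simps)
  qed
  have "measure lebesgue (box a b) = measure lborel (box a b)" by simp
  also have "\<dots> = (\<Prod>u\<in>Basis. (b - a) \<bullet> u)"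
  proof -
    have "\<forall>u\<in>Basis. a \<bullet> u \<le> b \<bullet> u" using s e by (simp add: inner_diff_left) (metis diff_ge_0_iff_ge less_imp_le)
    then show ?thesis by (simp add: measure_lborel_box_eq)
  qed
  also have "\<dots> = side Q ^ CARD('d)" using e by simp
  finally show ?thesis .
qed

lemma dcube_lmeasurable: "dcube Q \<in> lmeasurable"
proof -
  have "sets borel \<subseteq> sets lebesgue" by force
  then show ?thesis
    by (meson bounded_cbox bounded_set_imp_lmeasurable bounded_subset dcube_box(2) dcube_borel subsetD)
qed

lemma dcube_measure_ge: "measure lebesgue (dcube (Q::('d::finite) dyad)) \<ge> side Q ^ CARD('d)"
proof -
  have "measure lebesgue (box (\<chi> i. real_of_int (snd Q i) * side Q) (\<chi> i. (real_of_int (snd Q i) + 1) * side Q) :: (real^'d) set) \<le> measure lebesgue (dcube Q)"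
    by (rule measure_mono_fmeasurable[OF dcube_box(1)]) (auto simp: dcube_lmeasurable)
  then show ?thesis using measure_box_side by metis
qed


lemma pw_bound:
  fixes y t p :: real
  assumes "0 \<le> y" "0 < t" "1 \<le> p"
  shows "y \<le> t + y powr p / t powr (p - 1)"
proof (cases "y \<le> t")
  case True
  have "0 \<le> y powr p / t powr (p - 1)" by simp
  then show ?thesis using True by linarith
next
  case False
  then have yt: "y > t" by simp
  then have y0: "y > 0" using assms by simp
  have "t powr (p - 1) \<le> y powr (p - 1)"
    using yt assms by (intro powr_mono2) auto
  then have "y * t powr (p - 1) \<le> y * y powr (p - 1)" using y0 by simp
  also have "\<dots> = y powr p" using y0 by (simp add: powr_mult_base)
  finally have "y \<le> y powr p / t powr (p - 1)" using assms by (simp add: pos_le_divide_eq)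
  then show ?thesis using assms by linarith
qed

lemma avg_bound:
  fixes f :: "real^'d::finite \<Rightarrow> real" and Q :: "'d dyad"
  assumes fm: "f \<in> borel_measurable lebesgue" and int: "integrable lebesgue (\<lambda>x. \<bar>f x\<bar> powr p)"
    and p: "1 \<le> p"
  shows "avg f Q \<le> (1 + integral\<^sup>L lebesgue (\<lambda>x. \<bar>f x\<bar> powr p)) * side Q powr (- real CARD('d) / p)"
proof -
  define s where "s = side Q"
  define d where "d = real CARD('d)"
  define I where "I = integral\<^sup>L lebesgue (\<lambda>x. \<bar>f x\<bar> powr p)"
  define m where "m = measure lebesgue (dcube Q)"
  define t where "t = s powr (- d / p)"
  define A where "A = dcube Q"
  have s: "s > 0" by (simp add: s_def side_def)
  have t: "t > 0" using s by (simp add: t_def)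
  have I0: "I \<ge> 0" unfolding I_def by simp
  have msd: "m \<ge> s powr d"
    using dcube_measure_ge[of Q] s by (simp add: m_def s_def d_def powr_realpow)
  have m0: "m > 0" using msd s by (smt (verit) powr_gt_zero)
  have Al: "A \<in> lmeasurable" by (simp add: A_def dcube_lmeasurable)
  have As: "A \<in> sets lebesgue" using Al by (simp add: fmeasurable_def)
  have hpi: "integrable lebesgue (\<lambda>x. indicator A x * \<bar>f x\<bar> powr p)"
    using integrable_mult_indicator[OF As int] by simp
  define g where "g x = indicator A x * t + (indicator A x * \<bar>f x\<bar> powr p) / t powr (p - 1)" for x
  have gi: "integrable lebesgue g"
    unfolding g_def
  proof (intro Bochner_Integration.integrable_add integrable_divide)
    have "integrable lebesgue (indicator A :: _ \<Rightarrow> real)"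
      using Al unfolding fmeasurable_def by (intro integrable_real_indicator) blast+
    then show "integrable lebesgue (\<lambda>x. indicator A x * t)" by (rule integrable_mult_left)
  qed (rule hpi)
  have hm: "(\<lambda>x. indicator A x * \<bar>f x\<bar>) \<in> borel_measurable lebesgue"
    using As fm by measurable
  have hle: "norm (indicator A x * \<bar>f x\<bar>) \<le> norm (g x)" for x
  proof (cases "x \<in> A")
    case True
    then show ?thesis using pw_bound[of "\<bar>f x\<bar>" t p] t p
      by (simp add: g_def)
  qed (simp add: g_def)
  have hi: "integrable lebesgue (\<lambda>x. indicator A x * \<bar>f x\<bar>)"
    by (rule Bochner_Integration.integrable_bound[OF gi hm]) (rule AE_I2, rule hle)
  have "integral\<^sup>L lebesgue (\<lambda>x. indicator A x * \<bar>f x\<bar>) \<le> integral\<^sup>L lebesgue g"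
    using t p by (intro integral_mono[OF hi gi]) (auto simp: g_def pw_bound split: split_indicator)
  also have "integral\<^sup>L lebesgue g = m * t + (integral\<^sup>L lebesgue (\<lambda>x. indicator A x * \<bar>f x\<bar> powr p)) / t powr (p - 1)"
    unfolding g_def using Al int
    using hpi As by (subst Bochner_Integration.integral_add) (auto simp: m_def A_def fmeasurable_def)
  also have "integral\<^sup>L lebesgue (\<lambda>x. indicator A x * \<bar>f x\<bar> powr p) \<le> I"
    unfolding I_def using hpi int
    by (intro integral_mono) (auto split: split_indicator)
  finally have ineq: "(LINT x:A|lebesgue. \<bar>f x\<bar>) \<le> m * t + I / t powr (p - 1)"
    using t by (simp add: set_lebesgue_integral_def divide_right_mono)
  have "avg f Q \<le> (m * t + I / t powr (p - 1)) / m"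
    unfolding avg_def using ineq m0 by (simp add: A_def m_def divide_right_mono)
  also have "\<dots> = t + I / (t powr (p - 1) * m)" using m0 by (simp add: field_simps)
  also have "\<dots> \<le> t + I / (t powr (p - 1) * s powr d)"
    using I0 msd t s m0 by (intro add_left_mono divide_left_mono mult_left_mono) auto
  also have "t powr (p - 1) * s powr d = 1 / t"
  proof -
    have "t powr (p - 1) * s powr d = s powr (- d / p * (p - 1) + d)"
      unfolding t_def using s by (simp add: powr_powr powr_add[symmetric])
    also have "- d / p * (p - 1) + d = d / p" using p by (simp add: field_simps)
    also have "s powr (d / p) = 1 / t" unfolding t_def using s by (simp add: powr_minus_divide)
    finally show ?thesis .
  qed
  also have "t + I / (1 / t) = (1 + I) * t" by (simp add: algebra_simps)
  finally show ?thesis by (simp add: I_def t_def s_def d_def)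
qed


lemma fst_bound:
  fixes f :: "real^'d::finite \<Rightarrow> real"
  assumes fm: "f \<in> borel_measurable lebesgue" and int: "integrable lebesgue (\<lambda>x. \<bar>f x\<bar> powr p)"
    and p: "1 \<le> p" and a: "0 < \<alpha>" and pa: "p < real CARD('d) / \<alpha>" and e: "\<epsilon> > 0"
  shows "\<exists>G. \<forall>Q::'d dyad. side Q powr \<alpha> * avg f Q > \<epsilon> \<longrightarrow> fst Q \<le> G"
proof -
  define C where "C = 1 + integral\<^sup>L lebesgue (\<lambda>x. \<bar>f x\<bar> powr p)"
  define d where "d = real CARD('d)"
  define \<beta> where "\<beta> = d / p - \<alpha>"
  have p0: "p > 0" using p by simp
  have b: "\<beta> > 0" using pa a p0 unfolding \<beta>_def d_def by (simp add: field_simps)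
  have C: "C > 0" unfolding C_def by (smt (verit) integral_nonneg_AE AE_I2 powr_ge_zero)
  define G where "G = \<lceil>log 2 (C / \<epsilon>) / \<beta>\<rceil>"
  show ?thesis
  proof (intro exI[of _ G] allI impI)
    fix Q :: "'d dyad"
    assume h: "side Q powr \<alpha> * avg f Q > \<epsilon>"
    define n where "n = real_of_int (fst Q)"
    have sQ: "side Q = 2 powr n" by (simp add: side_def n_def)
    have "side Q powr \<alpha> * avg f Q \<le> side Q powr \<alpha> * (C * side Q powr (- d / p))"
      using avg_bound[OF fm int p, of Q] by (intro mult_left_mono) (auto simp: C_def d_def)
    also have "\<dots> = C * 2 powr (- \<beta> * n)"
      unfolding sQ \<beta>_def by (simp add: powr_powr powr_add[symmetric] algebra_simps)
    finally have "\<epsilon> < C * 2 powr (- \<beta> * n)" using h by linarith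
    then have "\<epsilon> / C < 2 powr (- \<beta> * n)" using C by (simp add: pos_divide_less_eq mult.commute)
    then have "log 2 (\<epsilon> / C) < - \<beta> * n" using e C
      using log_less[of 2 "\<epsilon> / C" "2 powr (- \<beta> * n)"] by simp
    moreover have "log 2 (\<epsilon> / C) = - log 2 (C / \<epsilon>)" using e C
      by (simp add: log_divide)
    ultimately have "\<beta> * n < log 2 (C / \<epsilon>)" by linarith
    then have "n < log 2 (C / \<epsilon>) / \<beta>" using b by (simp add: pos_less_divide_eq mult.commute)
    then have "n \<le> real_of_int G" unfolding G_def by linarith
    then show "fst Q \<le> G" by (simp add: n_def)
  qed
qed


theorem lemma3p6:
  fixes f :: "real^'d \<Rightarrow> real" and \<alpha> p \<epsilon> :: real
  assumes "0 < \<alpha>" "\<alpha> < real CARD('d)"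
    and "1 \<le> p" "p < real CARD('d) / \<alpha>"
    and "f \<in> borel_measurable lebesgue" "integrable lebesgue (\<lambda>x. \<bar>f x\<bar> powr p)"
    and "\<epsilon> > 0"
  shows "\<exists>Qt \<subseteq> Qalpha \<alpha> f.
    (\<forall>Q\<in>Qalpha \<alpha> f. side Q powr \<alpha> * avg f Q > \<epsilon> \<longrightarrow>
        (\<exists>P\<in>Qt. dcube Q \<subseteq> dcube (prt P) \<and> avg f Q \<le> 2 ^ CARD('d) * avg f P)) \<and>
    (\<forall>Q\<in>Qt. \<forall>P\<in>Qt. dcube (prt Q) = dcube (prt P) \<or> dcube (prt Q) \<inter> dcube (prt P) = {}
        \<or> avg f Q / avg f P \<notin> {2 powr (- real CARD('d)) <..< 2 ^ CARD('d)})"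
proof -
  obtain G where G: "\<And>Q::'d dyad. side Q powr \<alpha> * avg f Q > \<epsilon> \<Longrightarrow> fst Q \<le> G"
    using fst_bound[OF assms(5,6,3,1,4,7)] by blast
  define S where "S = {Q \<in> Qalpha \<alpha> f. side Q powr \<alpha> * avg f Q > \<epsilon>}"
  define D :: real where "D = 2 ^ CARD('d)"
  have D1: "D \<ge> 1" by (simp add: D_def)
  define R where "R = {(P,Q). P \<in> S \<and> dcube (prt Q) \<subseteq> dcube (prt P) \<and> fst Q < fst P \<and> avg f Q < D * avg f P}"
  have SG: "Q \<in> S \<Longrightarrow> fst Q \<le> G" for Q using G by (auto simp: S_def)
  have Spos: "Q \<in> S \<Longrightarrow> avg f Q > 0" for Q
  proof -
    assume "Q \<in> S"
    then have "side Q powr \<alpha> * avg f Q > 0" using assms(7) by (auto simp: S_def)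
    moreover have "side Q powr \<alpha> > 0" by (simp add: side_def)
    ultimately show ?thesis by (simp add: zero_less_mult_iff)
  qed
  have "R \<subseteq> Wellfounded.measure (\<lambda>Q. nat (G - fst Q))"
    using SG by (fastforce simp: R_def)
  then have wfR: "wf R" by (rule wf_subset[OF wf_measure])
  obtain T where T: "\<And>Q. Q \<in> T \<longleftrightarrow> (Q \<in> S \<and> \<not>(\<exists>P. (P,Q) \<in> R \<and> P \<in> T))"
    using kernel_exists[OF wfR, of "\<lambda>Q. Q \<in> S"] by blast
  have TS: "T \<subseteq> S" using T by blast
  have TQ: "T \<subseteq> Qalpha \<alpha> f" using TS by (auto simp: S_def)
  have cover: "\<exists>P\<in>T. dcube Q \<subseteq> dcube (prt P) \<and> avg f Q \<le> D * avg f P"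
    if "Q \<in> Qalpha \<alpha> f" "side Q powr \<alpha> * avg f Q > \<epsilon>" for Q
  proof -
    have QS: "Q \<in> S" using that by (simp add: S_def)
    show ?thesis
    proof (cases "Q \<in> T")
      case True
      have "avg f Q \<le> D * avg f Q" using Spos[OF QS] D1 by simp
      then show ?thesis using True dcube_prt by blast
    next
      case False
      then obtain P where P: "(P,Q) \<in> R" "P \<in> T" using T QS by blast
      then have "dcube Q \<subseteq> dcube (prt P)" "avg f Q \<le> D * avg f P"
        using dcube_prt[of Q] by (auto simp: R_def)
      then show ?thesis using P by blast
    qed
  qed
  have pair: "dcube (prt Q) = dcube (prt P) \<or> dcube (prt Q) \<inter> dcube (prt P) = {}
        \<or> avg f Q / avg f P \<notin> {2 powr (- real CARD('d)) <..< D}"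
    if QT: "Q \<in> T" and PT: "P \<in> T" for Q P
  proof (cases "dcube (prt Q) \<inter> dcube (prt P) = {}")
    case False
    then obtain x where x: "x \<in> dcube (prt Q)" "x \<in> dcube (prt P)" by blast
    have fp: "fst (prt A) = fst A + 1" for A :: "'d dyad" by (simp add: prt_def)
    have pQ: "avg f Q > 0" and pP: "avg f P > 0" using Spos TS QT PT by blast+
    consider "fst Q = fst P" | "fst Q < fst P" | "fst P < fst Q" by linarith
    then show ?thesis
    proof cases
      case 1
      then have "prt Q = prt P" using dcube_unique[OF x] fp by simp
      then show ?thesis by simp
    next
      case 2
      then have "dcube (prt Q) \<subseteq> dcube (prt P)" using dcube_nest[OF x] fp by simp
      moreover have "(P,Q) \<notin> R" using T[of Q] QT PT by blast
      moreover have "P \<in> S" using TS PT by blast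
      ultimately have "\<not> avg f Q < D * avg f P" using 2 unfolding R_def by blast
      then have "avg f Q / avg f P \<ge> D" using pP by (simp add: pos_le_divide_eq)
      then show ?thesis by simp
    next
      case 3
      then have "dcube (prt P) \<subseteq> dcube (prt Q)" using dcube_nest[OF x(2,1)] fp by simp
      moreover have "(Q,P) \<notin> R" using T[of P] QT PT by blast
      moreover have "Q \<in> S" using TS QT by blast
      ultimately have "\<not> avg f P < D * avg f Q" using 3 unfolding R_def by blast
      then have "avg f Q * D \<le> avg f P" by (simp add: mult.commute)
      then have "avg f Q / avg f P \<le> 1 / D" using pP D1 by (simp add: field_simps)
      moreover have "2 powr (- real CARD('d)) = 1 / D"
        by (simp add: D_def powr_minus_divide powr_realpow)
      ultimately show ?thesis by simp
    qed
  qed simp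
  show ?thesis
    using TQ cover pair unfolding D_def by blast
qed

end
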